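(* Let $L$ be the Kirchhoff matrix of a weighted digraph $\Gamma$, let $\varepsilon>0$ be such that $P=I-\varepsilon L$ is row stochastic, and let $P^{\infty}=\lim_{m\to\infty}\frac1m\sum_{i=1}^m P^i$ (Ces\`aro limit). Then $P^{\infty}=\bar J$, the normalized matrix of maximum out-forests of $\Gamma$.
   Context: A weighted digraph $\Gamma$ has vertex set $\{1,\dots,n\}$, no loops, and each arc $j\to i$ ($j\ne i$) has a positive weight $a_{ij}$; $a_{ij}=0$ if there is no such arc. Its Kirchhoff matrix $L=[\ell_{ij}]$ has $\ell_{ij}=-a_{ij}$ for $j\ne i$ and $\ell_{ii}=\sum_{k\ne i}a_{ik}$. An out-forest of $\Gamma$ is a spanning subgraph whose weak components are diverging trees (rooted directed trees with paths from the root to all vertices); a maximum out-forest is one with the maximum number of arcs. The weight of a subgraph is the product of its arc weights. The normalized matrix of maximum out-forests $\bar J$ has $\bar J_{ij}$ equal to the total weight of the maximum out-forests of $\Gamma$ in which $i$ belongs to the tree rooted at $j$, divided by the total weight of all maximum out-forests. *)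

theory Defs
  imports "HOL-Analysis.Analysis"
begin

text \<open>Weighted digraph on the finite vertex type 'n, given by weights a i j \<ge> 0
  (arc j \<rightarrow> i iff a i j > 0, no loops).  An arc j \<rightarrow> i is the pair (j, i).\<close>

definition weighted_digraph :: "('n::finite \<Rightarrow> 'n \<Rightarrow> real) \<Rightarrow> bool" where
  "weighted_digraph a \<longleftrightarrow> (\<forall>i. a i i = 0) \<and> (\<forall>i j. a i j \<ge> 0)"

definition arcs :: "('n::finite \<Rightarrow> 'n \<Rightarrow> real) \<Rightarrow> ('n \<times> 'n) set" where
  "arcs a = {(j, i). j \<noteq> i \<and> a i j > 0}"

definition kirchhoff :: "('n::finite \<Rightarrow> 'n \<Rightarrow> real) \<Rightarrow> real^'n^'n" where
  "kirchhoff a = (\<chi> i j. if i = j then (\<Sum>k\<in>UNIV - {i}. a i k) else - a i j)"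

definition row_stochastic :: "real^'n^'n::finite \<Rightarrow> bool" where
  "row_stochastic P \<longleftrightarrow> (\<forall>i j. P $ i $ j \<ge> 0) \<and> (\<forall>i. (\<Sum>j\<in>UNIV. P $ i $ j) = 1)"

primrec matpow :: "real^'n^'n::finite \<Rightarrow> nat \<Rightarrow> real^'n^'n" where
  "matpow P 0 = mat 1"
| "matpow P (Suc m) = matpow P m ** P"

text \<open>A diverging tree with vertex set C and arc set T: weakly spanning, with |C|-1 arcs
  (hence a tree) and a root from which every vertex of C is reachable.\<close>
definition diverging_tree :: "('n \<times> 'n) set \<Rightarrow> 'n set \<Rightarrow> bool" where
  "diverging_tree T C \<longleftrightarrow> T \<subseteq> C \<times> C \<and> finite C \<and> card T + 1 = card C \<and>
     (\<exists>r\<in>C. \<forall>v\<in>C. (r, v) \<in> T\<^sup>*)"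

definition weak_components :: "('n \<times> 'n) set \<Rightarrow> 'n set set" where
  "weak_components F = UNIV // ((F \<union> F\<inverse>)\<^sup>*)"

definition out_forest :: "('n::finite \<Rightarrow> 'n \<Rightarrow> real) \<Rightarrow> ('n \<times> 'n) set \<Rightarrow> bool" where
  "out_forest a F \<longleftrightarrow> F \<subseteq> arcs a \<and>
     (\<forall>C\<in>weak_components F. diverging_tree (F \<inter> (C \<times> C)) C)"

definition max_out_forests :: "('n::finite \<Rightarrow> 'n \<Rightarrow> real) \<Rightarrow> ('n \<times> 'n) set set" where
  "max_out_forests a = {F. out_forest a F \<and>
     card F = Max (card ` {G. out_forest a G})}"

definition subgraph_weight :: "('n \<Rightarrow> 'n \<Rightarrow> real) \<Rightarrow> ('n \<times> 'n) set \<Rightarrow> real" where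
  "subgraph_weight a F = (\<Prod>(j, i)\<in>F. a i j)"

definition in_tree_rooted_at :: "('n \<times> 'n) set \<Rightarrow> 'n \<Rightarrow> 'n \<Rightarrow> bool" where
  "in_tree_rooted_at F i j \<longleftrightarrow> (\<forall>k. (k, j) \<notin> F) \<and> (j, i) \<in> F\<^sup>*"

definition Jbar :: "('n::finite \<Rightarrow> 'n \<Rightarrow> real) \<Rightarrow> real^'n^'n" where
  "Jbar a = (\<chi> i j.
     (\<Sum>F\<in>{F\<in>max_out_forests a. in_tree_rooted_at F i j}. subgraph_weight a F) /
     (\<Sum>F\<in>max_out_forests a. subgraph_weight a F))"

end

theory Submission
  imports Defs
begin


definition forest :: "('n::finite \<Rightarrow> 'n \<Rightarrow> real) \<Rightarrow> ('n \<times> 'n) set \<Rightarrow> bool" where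
  "forest a F \<longleftrightarrow> F \<subseteq> arcs a \<and> (\<forall>u v w. (u,w)\<in>F \<longrightarrow> (v,w)\<in>F \<longrightarrow> u = v) \<and> acyclic F"

definition isroot :: "('n \<times> 'n) set \<Rightarrow> 'n \<Rightarrow> bool" where
  "isroot F r \<longleftrightarrow> (\<forall>k. (k, r) \<notin> F)"

definition froot :: "('n \<times> 'n) set \<Rightarrow> 'n \<Rightarrow> 'n" where
  "froot F v = (THE r. (r, v) \<in> F\<^sup>* \<and> isroot F r)"

lemma forest_wf: "forest a (F::('n::finite \<times> 'n) set) \<Longrightarrow> wf F"
  unfolding forest_def by (intro finite_acyclic_wf) auto

lemma root_exists:
  assumes "forest a F" shows "\<exists>r. (r, v) \<in> F\<^sup>* \<and> isroot F r"
  using forest_wf[OF assms]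
proof (induction v rule: wf_induct_rule)
  case (less v)
  show ?case
  proof (cases "isroot F v")
    case True then show ?thesis by auto
  next
    case False
    then obtain u where u: "(u,v) \<in> F" unfolding isroot_def by auto
    from less[OF u] obtain r where "(r,u)\<in>F\<^sup>*" "isroot F r" by auto
    with u show ?thesis by (meson rtrancl.rtrancl_into_rtrancl)
  qed
qed

lemma root_unique:
  assumes "forest a F" shows "(r, v) \<in> F\<^sup>* \<Longrightarrow> isroot F r \<Longrightarrow> (r', v) \<in> F\<^sup>* \<Longrightarrow> isroot F r' \<Longrightarrow> r = r'"
  using forest_wf[OF assms]
proof (induction v arbitrary: r r' rule: wf_induct_rule)
  case (less v)
  have indeg: "\<And>u w x. (u,x)\<in>F \<Longrightarrow> (w,x)\<in>F \<Longrightarrow> u = w" using assms unfolding forest_def by blast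
  show ?case
  proof (cases "isroot F v")
    case True
    have "r = v" using less.prems(1) True by (auto simp: isroot_def elim: rtranclE)
    moreover have "r' = v" using less.prems(3) True by (auto simp: isroot_def elim: rtranclE)
    ultimately show ?thesis by simp
  next
    case False
    then obtain u where u: "(u,v) \<in> F" unfolding isroot_def by auto
    have "r \<noteq> v" using False less.prems by auto
    then obtain y where "(r,y)\<in>F\<^sup>*" "(y,v)\<in>F" using less.prems(1) by (auto elim: rtranclE)
    with indeg u have ru: "(r,u)\<in>F\<^sup>*" by metis
    have "r' \<noteq> v" using False less.prems by auto
    then obtain y' where "(r',y')\<in>F\<^sup>*" "(y',v)\<in>F" using less.prems(3) by (auto elim: rtranclE)
    with indeg u have ru': "(r',u)\<in>F\<^sup>*" by metis
    show ?thesis using less.IH[OF u ru less.prems(2) ru' less.prems(4)] .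
  qed
qed

lemma root_prop:
  assumes "forest a F" shows "(froot F v, v) \<in> F\<^sup>* \<and> isroot F (froot F v)"
proof -
  obtain r where r: "(r, v) \<in> F\<^sup>* \<and> isroot F r" using root_exists[OF assms] by blast
  show ?thesis unfolding froot_def
    by (rule theI[of _ r]) (use r root_unique[OF assms] in blast)+
qed

lemma root_eq:
  assumes "forest a F" "(r, v) \<in> F\<^sup>*" "isroot F r" shows "froot F v = r"
  using root_prop[OF assms(1)] root_unique[OF assms(1)] assms(2,3) by blast



lemma wc_iff: "C \<in> weak_components F \<longleftrightarrow> (\<exists>x. C = ((F \<union> F\<inverse>)\<^sup>*) `` {x})"
  by (auto simp: weak_components_def quotient_def)

lemma root_step: "forest a F \<Longrightarrow> (u,v)\<in>F \<Longrightarrow> froot F v = froot F u"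
  by (meson root_eq root_prop rtrancl.rtrancl_into_rtrancl)

lemma root_rtrancl: assumes "forest a F" "(u,v)\<in>F\<^sup>*" shows "froot F v = froot F u"
  using assms(2) by (induction rule: rtrancl_induct) (auto dest: root_step[OF assms(1)])

lemma root_E: assumes "forest a F" "(u,v)\<in>(F \<union> F\<inverse>)\<^sup>*" shows "froot F v = froot F u"
  using assms(2) by (induction rule: rtrancl_induct) (auto dest: root_step[OF assms(1)])

lemma rtrancl_in_E: "(u,v) \<in> F\<^sup>* \<Longrightarrow> (u,v) \<in> (F \<union> F\<inverse>)\<^sup>* \<and> (v,u) \<in> (F \<union> F\<inverse>)\<^sup>*"
proof (induction rule: rtrancl_induct)
  case (step y z)
  have "(y,z) \<in> (F \<union> F\<inverse>)\<^sup>*" "(z,y) \<in> (F \<union> F\<inverse>)\<^sup>*" using step(2) by auto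
  then show ?case using step(3) by (meson rtrancl_trans)
qed auto

lemma class_eq: "forest a F \<Longrightarrow> ((F \<union> F\<inverse>)\<^sup>*) `` {x} = {v. froot F v = froot F x}"
proof (intro equalityI subsetI)
  fix v assume "forest a F" "v \<in> ((F \<union> F\<inverse>)\<^sup>*) `` {x}"
  then show "v \<in> {v. froot F v = froot F x}" using root_E by fastforce
next
  fix v assume f: "forest a F" and "v \<in> {v. froot F v = froot F x}"
  then have eq: "froot F v = froot F x" by simp
  have "(x, froot F x) \<in> (F \<union> F\<inverse>)\<^sup>*" using rtrancl_in_E[OF conjunct1[OF root_prop[OF f, of x]]] by simp
  moreover have "(froot F x, v) \<in> (F \<union> F\<inverse>)\<^sup>*" using rtrancl_in_E[OF conjunct1[OF root_prop[OF f, of v]]] eq by simp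
  ultimately show "v \<in> ((F \<union> F\<inverse>)\<^sup>*) `` {x}" by (meson ImageI rtrancl_trans singletonI)
qed

lemma path_in_class:
  assumes f: "forest a F" and "(u,v)\<in>F\<^sup>*"
  shows "(u,v) \<in> (F \<inter> ({w. froot F w = froot F u} \<times> {w. froot F w = froot F u}))\<^sup>*"
  using assms(2)
proof (induction rule: rtrancl_induct)
  case (step y z)
  have "froot F y = froot F u" using root_rtrancl[OF f step(1)] .
  moreover have "froot F z = froot F y" using root_step[OF f step(2)] .
  ultimately have "(y,z) \<in> F \<inter> ({w. froot F w = froot F u} \<times> {w. froot F w = froot F u})"
    using step(2) by auto
  then show ?case using step(3) by (meson rtrancl.rtrancl_into_rtrancl)
qed auto

lemma forest_out_forest:
  assumes f: "forest a F" shows "out_forest a F"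
  unfolding out_forest_def
proof (intro conjI ballI)
  show "F \<subseteq> arcs a" using f by (simp add: forest_def)
  have indeg: "\<And>u w x. (u,x)\<in>F \<Longrightarrow> (w,x)\<in>F \<Longrightarrow> u = w" using f unfolding forest_def by blast
  fix C assume "C \<in> weak_components F"
  then obtain x where "C = ((F \<union> F\<inverse>)\<^sup>*) `` {x}" by (auto simp: wc_iff)
  then have C: "C = {v. froot F v = froot F x}" using class_eq[OF f] by simp
  define r where "r = froot F x"
  have rr: "froot F r = r" using root_prop[OF f, of x] root_eq[OF f, of r r] unfolding r_def by auto
  have rC: "r \<in> C" using C rr r_def by simp
  have reach: "\<forall>v\<in>C. (r, v) \<in> (F \<inter> C \<times> C)\<^sup>*"
  proof
    fix v assume "v \<in> C"
    then have "froot F v = r" using C r_def by simp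
    then have "(r,v)\<in>F\<^sup>*" using root_prop[OF f, of v] by simp
    from path_in_class[OF f this] show "(r, v) \<in> (F \<inter> C \<times> C)\<^sup>*" using rr C r_def by simp
  qed
  have bij: "bij_betw snd (F \<inter> C \<times> C) (C - {r})"
    unfolding bij_betw_def
  proof
    show "inj_on snd (F \<inter> C \<times> C)" using indeg by (auto simp: inj_on_def)
    show "snd ` (F \<inter> C \<times> C) = C - {r}"
    proof (intro equalityI subsetI)
      fix v assume "v \<in> snd ` (F \<inter> C \<times> C)"
      then obtain u where "(u,v) \<in> F" "v \<in> C" by auto
      moreover have "isroot F r" using root_prop[OF f, of x] r_def by simp
      ultimately show "v \<in> C - {r}" by (auto simp: isroot_def)
    next
      fix v assume v: "v \<in> C - {r}"
      then have "froot F v = r" using C r_def by simp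
      with v have "\<not> isroot F v" using root_eq[OF f, of v v] by auto
      then obtain u where u: "(u,v)\<in>F" by (auto simp: isroot_def)
      have "froot F u = r" using root_step[OF f u] \<open>froot F v = r\<close> by simp
      then have "u \<in> C" using C r_def by simp
      then show "v \<in> snd ` (F \<inter> C \<times> C)" using u v by force
    qed
  qed
  have "card (F \<inter> C \<times> C) = card (C - {r})" using bij_betw_same_card[OF bij] .
  moreover have "card C \<ge> 1" using rC card_gt_0_iff[of C] by auto
  ultimately have "card (F \<inter> C \<times> C) + 1 = card C" using rC by simp
  then show "diverging_tree (F \<inter> C \<times> C) C"
    unfolding diverging_tree_def
  proof (intro conjI)
    show "finite C" by simp
    show "\<exists>r\<in>C. \<forall>v\<in>C. (r, v) \<in> (F \<inter> C \<times> C)\<^sup>*" using reach rC by (rule bexI[where x=r])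
    show "F \<inter> C \<times> C \<subseteq> C \<times> C" by blast
  qed (rule \<open>card (F \<inter> C \<times> C) + 1 = card C\<close>)
qed



lemma E_class_closed:
  assumes "(y,w) \<in> F \<or> (w,y) \<in> F" "w \<in> ((F \<union> F\<inverse>)\<^sup>*) `` {x}"
  shows "y \<in> ((F \<union> F\<inverse>)\<^sup>*) `` {x}"
proof -
  have "(w,y) \<in> (F \<union> F\<inverse>)\<^sup>*" using assms(1) by auto
  with assms(2) show ?thesis by (meson Image_singleton_iff rtrancl_trans)
qed

lemma tree_facts:
  assumes dt: "diverging_tree T C" and r: "r \<in> C" "\<forall>v\<in>C. (r, v) \<in> T\<^sup>*"
  shows "(\<forall>u v w. (u,w)\<in>T \<longrightarrow> (v,w)\<in>T \<longrightarrow> u = v) \<and> (\<forall>k. (k,r) \<notin> T)"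
proof -
  have TC: "T \<subseteq> C \<times> C" and fC: "finite C" and card: "card T + 1 = card C"
    using dt unfolding diverging_tree_def by auto
  have fT: "finite T" using TC fC by (meson finite_SigmaI finite_subset)
  have sub1: "C - {r} \<subseteq> snd ` T"
  proof
    fix v assume v: "v \<in> C - {r}"
    then have "(r,v) \<in> T\<^sup>*" "r \<noteq> v" using r by auto
    then obtain y where "(y,v) \<in> T" by (auto elim: rtranclE)
    then show "v \<in> snd ` T" by force
  qed
  have sub2: "snd ` T \<subseteq> C" using TC by auto
  have cle: "card (snd ` T) \<le> card T" using card_image_le[OF fT] .
  have rnot: "r \<notin> snd ` T"
  proof
    assume "r \<in> snd ` T"
    then have "C \<subseteq> snd ` T" using sub1 by auto
    then have "card C \<le> card (snd ` T)" by (simp add: card_mono fT)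
    then show False using cle card by simp
  qed
  then have eq: "snd ` T = C - {r}" using sub1 sub2 by auto
  then have "card (snd ` T) = card T" using card r(1) fC by simp
  then have "inj_on snd T" using eq_card_imp_inj_on[OF fT] by blast
  then have "\<forall>u v w. (u,w)\<in>T \<longrightarrow> (v,w)\<in>T \<longrightarrow> u = v" unfolding inj_on_def by (metis prod.inject snd_conv)
  moreover have "\<forall>k. (k,r) \<notin> T" using rnot by force
  ultimately show ?thesis by blast
qed

lemma out_forest_forest:
  assumes of: "out_forest a F" shows "forest a F"
proof -
  let ?E = "(F \<union> F\<inverse>)\<^sup>*"
  have arcs: "F \<subseteq> arcs a" using of by (simp add: out_forest_def)
  have dt: "\<And>x. diverging_tree (F \<inter> (?E``{x}) \<times> (?E``{x})) (?E``{x})"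
  proof -
    fix x
    have "?E``{x} \<in> weak_components F" unfolding wc_iff by blast
    then show "diverging_tree (F \<inter> (?E``{x}) \<times> (?E``{x})) (?E``{x})"
      using of unfolding out_forest_def by blast
  qed
  have self: "\<And>x. x \<in> ?E``{x}" by simp
  have indeg: "\<And>u v w. (u,w)\<in>F \<Longrightarrow> (v,w)\<in>F \<Longrightarrow> u = v"
  proof -
    fix u v w assume uw: "(u,w)\<in>F" and vw: "(v,w)\<in>F"
    obtain r where r: "r \<in> ?E``{w}" "\<forall>v\<in>?E``{w}. (r, v) \<in> (F \<inter> (?E``{w}) \<times> (?E``{w}))\<^sup>*"
      using dt[of w] unfolding diverging_tree_def by blast
    note tf = tree_facts[OF dt[of w] r]
    have "u \<in> ?E``{w}" "v \<in> ?E``{w}" using E_class_closed[OF _ self] uw vw by blast+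
    then show "u = v" using tf uw vw self[of w] by blast
  qed
  have acyc: "acyclic F" unfolding acyclic_def
  proof
    fix x
    obtain r where r: "r \<in> ?E``{x}" "\<forall>v\<in>?E``{x}. (r, v) \<in> (F \<inter> (?E``{x}) \<times> (?E``{x}))\<^sup>*"
      using dt[of x] unfolding diverging_tree_def by blast
    note tf = tree_facts[OF dt[of x] r]
    have "\<And>w. (r,w) \<in> (F \<inter> (?E``{x}) \<times> (?E``{x}))\<^sup>* \<Longrightarrow> (w,w) \<notin> F\<^sup>+"
    proof -
      fix w assume "(r,w) \<in> (F \<inter> (?E``{x}) \<times> (?E``{x}))\<^sup>*"
      then show "(w,w) \<notin> F\<^sup>+"
      proof (induction rule: rtrancl_induct)
        case base
        show ?case
        proof
          assume "(r,r) \<in> F\<^sup>+"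
          then obtain y where y: "(y,r) \<in> F" by (auto elim: tranclE)
          then have "y \<in> ?E``{x}" using E_class_closed[OF _ r(1)] by blast
          then show False using tf y r(1) by blast
        qed
      next
        case (step u w)
        show ?case
        proof
          assume "(w,w) \<in> F\<^sup>+"
          then obtain y where y: "(w,y) \<in> F\<^sup>*" "(y,w) \<in> F" using tranclD2 by metis 
          have "(u,w) \<in> F" using step(2) by blast
          then have "y = u" using indeg y(2) by blast
          then have "(u,u) \<in> F\<^sup>+" using y \<open>(u,w) \<in> F\<close> by (meson rtrancl_into_trancl2)
          then show False using step(3) by blast
        qed
      qed
    qed
    then show "(x,x) \<notin> F\<^sup>+" using r(2) self[of x] by blast
  qed
  show ?thesis unfolding forest_def using arcs indeg acyc by blast
qed

lemma out_forest_iff: "out_forest a F \<longleftrightarrow> forest a F"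
  using out_forest_forest forest_out_forest by blast




lemma forest_subset: assumes "forest a F" "G \<subseteq> F" shows "forest a G"
proof -
  have f: "F \<subseteq> arcs a" "\<forall>u v w. (u,w)\<in>F \<longrightarrow> (v,w)\<in>F \<longrightarrow> u = v" "acyclic F" using assms(1) unfolding forest_def by auto
  have "acyclic G" using acyclic_subset[OF f(3) assms(2)] .
  moreover have "G \<subseteq> arcs a" using f(1) assms(2) by (rule order_trans[rotated])
  moreover have "\<forall>u v w. (u,w)\<in>G \<longrightarrow> (v,w)\<in>G \<longrightarrow> u = v" using f(2) assms(2) by blast
  ultimately show ?thesis unfolding forest_def by blast
qed

lemma forest_insert:
  assumes f: "forest a F" and ri: "isroot F i" and pa: "(p,i) \<in> arcs a" and np: "(i,p) \<notin> F\<^sup>*"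
  shows "forest a (insert (p,i) F)"
proof -
  have f: "F \<subseteq> arcs a" "\<forall>u v w. (u,w)\<in>F \<longrightarrow> (v,w)\<in>F \<longrightarrow> u = v" "acyclic F" using f unfolding forest_def by auto
  have "acyclic (insert (p,i) F)" using f(3) np by simp
  moreover have "insert (p,i) F \<subseteq> arcs a" using f(1) pa by simp
  moreover have "\<forall>u v w. (u,w)\<in>insert (p,i) F \<longrightarrow> (v,w)\<in>insert (p,i) F \<longrightarrow> u = v"
  proof (intro allI impI)
    fix u v w assume "(u,w)\<in>insert (p,i) F" "(v,w)\<in>insert (p,i) F"
    then show "u = v" using f(2) ri unfolding isroot_def by (cases "w = i") auto
  qed
  ultimately show ?thesis unfolding forest_def by blast
qed

lemma root_self:
  assumes f: "forest a F" and ri: "isroot F i" and "(i,v) \<in> F\<^sup>*" shows "froot F v = i"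
  using root_eq[OF f assms(3) ri] .

lemma root_insert:
  assumes f: "forest a F" and ri: "isroot F i" and pa: "(p,i) \<in> arcs a" and np: "(i,p) \<notin> F\<^sup>*"
  shows "froot (insert (p,i) F) v = (if (i,v) \<in> F\<^sup>* then froot F p else froot F v)"
proof -
  have fi: "forest a (insert (p,i) F)" using forest_insert[OF assms] .
  have sub: "F\<^sup>* \<subseteq> (insert (p,i) F)\<^sup>*" by (simp add: rtrancl_mono subset_insertI)
  show ?thesis
  proof (cases "(i,v) \<in> F\<^sup>*")
    case True
    have rp: "(froot F p, p) \<in> F\<^sup>*" "isroot F (froot F p)" using root_prop[OF f] by auto
    have ne: "froot F p \<noteq> i" using rp(1) np by auto
    have "(froot F p, v) \<in> (insert (p,i) F)\<^sup>*"
    proof -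
      have "(froot F p, p) \<in> (insert (p,i) F)\<^sup>*" using rp(1) sub by blast
      moreover have "(p, i) \<in> insert (p,i) F" by simp
      moreover have "(i, v) \<in> (insert (p,i) F)\<^sup>*" using True sub by blast
      ultimately show ?thesis by (meson rtrancl.rtrancl_into_rtrancl rtrancl_trans)
    qed
    moreover have "isroot (insert (p,i) F) (froot F p)" using rp(2) ne by (auto simp: isroot_def)
    ultimately show ?thesis using root_eq[OF fi] True by simp
  next
    case False
    have rv: "(froot F v, v) \<in> F\<^sup>*" "isroot F (froot F v)" using root_prop[OF f] by auto
    have ne: "froot F v \<noteq> i" using rv(1) False by auto
    have "(froot F v, v) \<in> (insert (p,i) F)\<^sup>*" using rv(1) sub by blast
    moreover have "isroot (insert (p,i) F) (froot F v)" using rv(2) ne by (auto simp: isroot_def)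
    ultimately show ?thesis using root_eq[OF fi] False by simp
  qed
qed

definition Rset :: "('n::finite \<Rightarrow> 'n \<Rightarrow> real) \<Rightarrow> 'n \<Rightarrow> nat \<Rightarrow> ('n \<times> 'n) set set" where
  "Rset a i n = {F. forest a F \<and> isroot F i \<and> card F + 1 = n}"

definition Pset :: "('n::finite \<Rightarrow> 'n \<Rightarrow> real) \<Rightarrow> 'n \<Rightarrow> ('n \<times> 'n) set \<Rightarrow> 'n set" where
  "Pset a i F = {p. (i,p) \<notin> F\<^sup>* \<and> a i p > 0}"

lemma Pset_arcs: "p \<in> Pset a i F \<Longrightarrow> (p,i) \<in> arcs a \<and> (i,p) \<notin> F\<^sup>*"
  by (auto simp: Pset_def arcs_def)

lemma sum_nonroot:
  fixes g :: "('n::finite \<times> 'n) set \<Rightarrow> real"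
  shows "(\<Sum>H\<in>{H. forest a H \<and> card H = n \<and> \<not> isroot H i}. g H)
       = (\<Sum>F\<in>Rset a i n. \<Sum>p\<in>Pset a i F. g (insert (p,i) F))"
proof -
  define par where "par H = (THE p. (p,i) \<in> H)" for H :: "('n \<times> 'n) set"
  have "(\<Sum>F\<in>Rset a i n. \<Sum>p\<in>Pset a i F. g (insert (p,i) F))
      = (\<Sum>(F,p)\<in>(SIGMA F:Rset a i n. Pset a i F). g (insert (p,i) F))"
    by (rule sum.Sigma) auto
  also have "\<dots> = (\<Sum>H\<in>{H. forest a H \<and> card H = n \<and> \<not> isroot H i}. g H)"
  proof (rule sum.reindex_bij_witness[where j = "\<lambda>(F,p). insert (p,i) F"
        and i = "\<lambda>H. (H - {(par H, i)}, par H)"])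
    fix Fp assume Fp: "Fp \<in> (SIGMA F:Rset a i n. Pset a i F)"
    obtain F p where Fp_eq: "Fp = (F,p)" by (cases Fp)
    have F: "forest a F" "isroot F i" "card F + 1 = n" and p: "(p,i) \<in> arcs a" "(i,p) \<notin> F\<^sup>*"
      using Fp Pset_arcs unfolding Fp_eq Rset_def by auto
    have notin: "(p,i) \<notin> F" using F(2) by (auto simp: isroot_def)
    have parI: "par (insert (p,i) F) = p"
      unfolding par_def using F(2) by (auto simp: isroot_def)
    show "(\<lambda>H. (H - {(par H, i)}, par H)) ((\<lambda>(F,p). insert (p,i) F) Fp) = Fp"
      using parI notin unfolding Fp_eq by auto
    show "(\<lambda>(F,p). insert (p,i) F) Fp \<in> {H. forest a H \<and> card H = n \<and> \<not> isroot H i}"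
      using forest_insert[OF F(1,2) p] notin F(3) unfolding Fp_eq by (auto simp: isroot_def)
  next
    fix H assume H: "H \<in> {H. forest a H \<and> card H = n \<and> \<not> isroot H i}"
    then have fH: "forest a H" and cH: "card H = n" and nr: "\<not> isroot H i" by auto
    then obtain q where q: "(q,i) \<in> H" by (auto simp: isroot_def)
    have indeg: "\<And>u. (u,i) \<in> H \<Longrightarrow> u = q" using fH q unfolding forest_def by blast
    have pq: "par H = q" unfolding par_def using q indeg by blast
    show "(\<lambda>(F,p). insert (p,i) F) ((\<lambda>H. (H - {(par H, i)}, par H)) H) = H"
      using pq q by auto
    let ?F = "H - {(q,i)}"
    have fF: "forest a ?F" using forest_subset[OF fH] by blast
    have rF: "isroot ?F i" using indeg by (auto simp: isroot_def)
    have cF: "card ?F + 1 = n" using card.remove[of H "(q,i)"] cH q by simp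
    have qa: "(q,i) \<in> arcs a" using fH q unfolding forest_def by (meson subsetD)
    have nq: "(i,q) \<notin> ?F\<^sup>*"
    proof
      assume "(i,q) \<in> ?F\<^sup>*"
      then have "(i,q) \<in> H\<^sup>*" by (meson Diff_subset rtrancl_mono subsetD)
      then have "(i,i) \<in> H\<^sup>+" using q by (meson rtrancl_into_trancl1)
      then show False using fH unfolding forest_def acyclic_def by blast
    qed
    have "q \<in> Pset a i ?F" using qa nq by (auto simp: Pset_def arcs_def)
    then show "(\<lambda>H. (H - {(par H, i)}, par H)) H \<in> (SIGMA F:Rset a i n. Pset a i F)"
      using fF rF cF pq by (auto simp: Rset_def)
  qed auto
  finally show ?thesis by simp
qed



definition S :: "('n::finite \<Rightarrow> 'n \<Rightarrow> real) \<Rightarrow> nat \<Rightarrow> ('n \<times> 'n) set set" where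
  "S a n = {F. forest a F \<and> card F = n}"

definition ind :: "('n \<times> 'n) set \<Rightarrow> 'n \<Rightarrow> 'n \<Rightarrow> real" where
  "ind F v j = (if froot F v = j then 1 else 0)"

definition Qf :: "('n::finite \<Rightarrow> 'n \<Rightarrow> real) \<Rightarrow> nat \<Rightarrow> 'n \<Rightarrow> 'n \<Rightarrow> real" where
  "Qf a n v j = (\<Sum>F\<in>S a n. subgraph_weight a F * ind F v j)"

definition sig :: "('n::finite \<Rightarrow> 'n \<Rightarrow> real) \<Rightarrow> nat \<Rightarrow> real" where
  "sig a n = (\<Sum>F\<in>S a n. subgraph_weight a F)"

lemma weight_insert: "(p,i) \<notin> F \<Longrightarrow> subgraph_weight a (insert (p,i) (F::('n::finite \<times> 'n) set)) = a i p * subgraph_weight a F"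
  unfolding subgraph_weight_def by (simp add: prod.insert)

lemma antisym_sum:
  fixes x f :: "'n \<Rightarrow> real"
  shows "(\<Sum>p\<in>U. \<Sum>l\<in>U. x p * x l * (f p - f l)) = 0"
proof -
  have "(\<Sum>p\<in>U. \<Sum>l\<in>U. x p * x l * (f p - f l))
      = (\<Sum>p\<in>U. \<Sum>l\<in>U. x p * x l * f p) - (\<Sum>p\<in>U. \<Sum>l\<in>U. x p * x l * f l)"
    by (simp add: right_diff_distrib sum_subtractf)
  also have "(\<Sum>p\<in>U. \<Sum>l\<in>U. x p * x l * f l) = (\<Sum>l\<in>U. \<Sum>p\<in>U. x p * x l * f l)"
    by (rule sum.swap)
  also have "\<dots> = (\<Sum>p\<in>U. \<Sum>l\<in>U. x p * x l * f p)"
    by (simp add: mult.commute mult.left_commute)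
  finally show ?thesis by simp
qed

lemma Pset_extend:
  assumes wd: "weighted_digraph a" 
  shows "(\<Sum>p\<in>Pset a i F. a i p * g p) = (\<Sum>p\<in>{p. (i,p) \<notin> F\<^sup>*}. a i p * g p)"
proof (rule sum.mono_neutral_left)
  show "finite {p. (i,p) \<notin> F\<^sup>*}" by simp
  show "Pset a i F \<subseteq> {p. (i,p) \<notin> F\<^sup>*}" by (auto simp: Pset_def)
  show "\<forall>p\<in>{p. (i,p) \<notin> F\<^sup>*} - Pset a i F. a i p * g p = 0"
  proof
    fix p assume "p \<in> {p. (i,p) \<notin> F\<^sup>*} - Pset a i F"
    then have "\<not> a i p > 0" by (auto simp: Pset_def)
    moreover have "a i p \<ge> 0" using wd by (simp add: weighted_digraph_def)
    ultimately show "a i p * g p = 0" by simp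
  qed
qed

lemma sum_if_zero:
  fixes a :: "'n::finite \<Rightarrow> 'n \<Rightarrow> real" and h :: "'n \<Rightarrow> real"
  shows "(\<Sum>l\<in>UNIV. a i l * (if l \<in> D then 0 else h l)) = (\<Sum>l\<in>-D. a i l * h l)"
proof -
  have "(\<Sum>l\<in>UNIV. a i l * (if l \<in> D then 0 else h l)) = (\<Sum>l\<in>UNIV. if l \<in> -D then a i l * h l else 0)"
    by (rule sum.cong) auto
  also have "\<dots> = (\<Sum>l\<in>-D. a i l * h l)" by (simp add: sum.If_cases Compl_eq)
  finally show ?thesis .
qed

lemma ind_insert:
  assumes f: "forest a F" and ri: "isroot F i" and pa: "(p,i) \<in> arcs a" and np: "(i,p) \<notin> F\<^sup>*"
  shows "ind (insert (p,i) F) v j = (if (i,v) \<in> F\<^sup>* then ind F p j else ind F v j)"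
  unfolding ind_def using root_insert[OF assms, of v] by simp

lemma nonroot_part:
  assumes wd: "weighted_digraph a" and F: "forest a F" "isroot F i"
  shows "(\<Sum>p\<in>Pset a i F. subgraph_weight a (insert (p,i) F) *
            (\<Sum>l\<in>UNIV. a i l * (ind (insert (p,i) F) i j - ind (insert (p,i) F) l j))) = 0"
proof -
  let ?U = "{p. (i,p) \<notin> F\<^sup>*}"
  let ?D = "{l. (i,l) \<in> F\<^sup>*}"
  have eq1: "subgraph_weight a (insert (p,i) F) *
            (\<Sum>l\<in>UNIV. a i l * (ind (insert (p,i) F) i j - ind (insert (p,i) F) l j))
        = a i p * (subgraph_weight a F * (\<Sum>l\<in>?U. a i l * (ind F p j - ind F l j)))"
    if p: "p \<in> Pset a i F" for p
  proof -
    have pa: "(p,i) \<in> arcs a" "(i,p) \<notin> F\<^sup>*" using Pset_arcs[OF p] by auto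
    have notin: "(p,i) \<notin> F" using F(2) by (auto simp: isroot_def)
    have "(\<Sum>l\<in>UNIV. a i l * (ind (insert (p,i) F) i j - ind (insert (p,i) F) l j))
        = (\<Sum>l\<in>UNIV. a i l * (if l \<in> ?D then 0 else ind F p j - ind F l j))"
      by (rule sum.cong) (auto simp: ind_insert[OF F pa])
    also have "\<dots> = (\<Sum>l\<in>-?D. a i l * (ind F p j - ind F l j))" by (rule sum_if_zero)
    also have "-?D = ?U" by auto
    finally show ?thesis using weight_insert[OF notin] by simp
  qed
  have "(\<Sum>p\<in>Pset a i F. subgraph_weight a (insert (p,i) F) *
            (\<Sum>l\<in>UNIV. a i l * (ind (insert (p,i) F) i j - ind (insert (p,i) F) l j)))
      = (\<Sum>p\<in>Pset a i F. a i p * (subgraph_weight a F * (\<Sum>l\<in>?U. a i l * (ind F p j - ind F l j))))"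
    by (rule sum.cong) (use eq1 in auto)
  also have "\<dots> = (\<Sum>p\<in>?U. a i p * (subgraph_weight a F * (\<Sum>l\<in>?U. a i l * (ind F p j - ind F l j))))"
    by (rule Pset_extend[OF wd])
  also have "\<dots> = subgraph_weight a F * (\<Sum>p\<in>?U. \<Sum>l\<in>?U. a i p * a i l * (ind F p j - ind F l j))"
    by (simp add: sum_distrib_left mult.assoc mult.left_commute)
  also have "\<dots> = 0" by (simp add: antisym_sum)
  finally show ?thesis .
qed

lemma root_part:
  assumes wd: "weighted_digraph a" and F: "forest a F" "isroot F i"
  shows "subgraph_weight a F * (\<Sum>l\<in>UNIV. a i l * (ind F i j - ind F l j))
       = (\<Sum>l\<in>Pset a i F. subgraph_weight a (insert (l,i) F) *
            ((if i = j then 1 else 0) - ind (insert (l,i) F) i j))"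
proof -
  let ?U = "{p. (i,p) \<notin> F\<^sup>*}"
  let ?D = "{l. (i,l) \<in> F\<^sup>*}"
  let ?d = "(if i = j then 1 else 0) :: real"
  have ii: "ind F i j = ?d" unfolding ind_def using root_self[OF F] by simp
  have "(\<Sum>l\<in>UNIV. a i l * (ind F i j - ind F l j))
      = (\<Sum>l\<in>UNIV. a i l * (if l \<in> ?D then 0 else ?d - ind F l j))"
    by (rule sum.cong) (auto simp: ii ind_def root_self[OF F])
  also have "\<dots> = (\<Sum>l\<in>-?D. a i l * (?d - ind F l j))" by (rule sum_if_zero)
  also have "-?D = ?U" by auto
  also have "(\<Sum>l\<in>?U. a i l * (?d - ind F l j)) = (\<Sum>l\<in>Pset a i F. a i l * (?d - ind F l j))"
    by (rule Pset_extend[OF wd, symmetric])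
  finally have 1: "subgraph_weight a F * (\<Sum>l\<in>UNIV. a i l * (ind F i j - ind F l j))
      = (\<Sum>l\<in>Pset a i F. subgraph_weight a F * (a i l * (?d - ind F l j)))"
    by (simp add: sum_distrib_left)
  show ?thesis unfolding 1
  proof (rule sum.cong)
    fix l assume l: "l \<in> Pset a i F"
    have pa: "(l,i) \<in> arcs a" "(i,l) \<notin> F\<^sup>*" using Pset_arcs[OF l] by auto
    have notin: "(l,i) \<notin> F" using F(2) by (auto simp: isroot_def)
    show "subgraph_weight a F * (a i l * (?d - ind F l j))
        = subgraph_weight a (insert (l,i) F) * (?d - ind (insert (l,i) F) i j)"
      using weight_insert[OF notin] ind_insert[OF F pa, of i j] by simp
  qed simp
qed

lemma key_identity:
  assumes wd: "weighted_digraph a"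
  shows "Qf a (Suc n) i j + (\<Sum>l\<in>UNIV. a i l * (Qf a n i j - Qf a n l j))
       = (if i = j then sig a (Suc n) else 0)"
proof -
  let ?w = "subgraph_weight a"
  let ?d = "(if i = j then 1 else 0) :: real"
  define X where "X F = ?w F * (\<Sum>l\<in>UNIV. a i l * (ind F i j - ind F l j))" for F
  define RT where "RT = {H. isroot H i}"
  define NR where "NR m = {H. forest a H \<and> card H = m \<and> \<not> isroot H i}" for m
  have fin: "finite (A :: ('a::finite \<times> 'a) set set)" for A by simp
  have A: "(\<Sum>l\<in>UNIV. a i l * (Qf a n i j - Qf a n l j)) = (\<Sum>F\<in>S a n. X F)"
  proof -
    have "(\<Sum>l\<in>UNIV. a i l * (Qf a n i j - Qf a n l j))
        = (\<Sum>l\<in>UNIV. \<Sum>F\<in>S a n. a i l * (?w F * (ind F i j - ind F l j)))"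
      unfolding Qf_def by (simp add: sum_subtractf[symmetric] right_diff_distrib sum_distrib_left)
    also have "\<dots> = (\<Sum>F\<in>S a n. \<Sum>l\<in>UNIV. a i l * (?w F * (ind F i j - ind F l j)))"
      by (rule sum.swap)
    also have "\<dots> = (\<Sum>F\<in>S a n. X F)"
      unfolding X_def by (simp add: sum_distrib_left mult.left_commute)
    finally show ?thesis .
  qed
  have split: "(\<Sum>F\<in>S a n. X F) = (\<Sum>F\<in>S a n \<inter> RT. X F) + (\<Sum>F\<in>S a n - RT. X F)"
    by (rule sum.Int_Diff) simp
  have N: "(\<Sum>F\<in>S a n - RT. X F) = 0"
  proof -
    have "S a n - RT = NR n" by (auto simp: S_def RT_def NR_def)
    then have "(\<Sum>F\<in>S a n - RT. X F) = (\<Sum>F\<in>Rset a i n. \<Sum>p\<in>Pset a i F. X (insert (p,i) F))"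
      using sum_nonroot[of X a n i] unfolding NR_def by simp
    also have "\<dots> = 0"
    proof (rule sum.neutral, rule ballI)
      fix F assume "F \<in> Rset a i n"
      then have F: "forest a F" "isroot F i" by (auto simp: Rset_def)
      show "(\<Sum>p\<in>Pset a i F. X (insert (p,i) F)) = 0"
        unfolding X_def using nonroot_part[OF wd F] .
    qed
    finally show ?thesis .
  qed
  have R: "(\<Sum>F\<in>S a n \<inter> RT. X F) = (\<Sum>H\<in>NR (Suc n). ?w H * (?d - ind H i j))"
  proof -
    have "S a n \<inter> RT = Rset a i (Suc n)" by (auto simp: S_def RT_def Rset_def)
    then have "(\<Sum>F\<in>S a n \<inter> RT. X F)
        = (\<Sum>F\<in>Rset a i (Suc n). \<Sum>l\<in>Pset a i F. ?w (insert (l,i) F) * (?d - ind (insert (l,i) F) i j))"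
      using root_part[OF wd] unfolding X_def by (intro sum.cong) (auto simp: Rset_def)
    also have "\<dots> = (\<Sum>H\<in>NR (Suc n). ?w H * (?d - ind H i j))"
      unfolding NR_def by (rule sum_nonroot[symmetric])
    finally show ?thesis .
  qed
  have Sn1: "S a (Suc n) - RT = NR (Suc n)" by (auto simp: S_def RT_def NR_def)
  have Q: "Qf a (Suc n) i j = (\<Sum>H\<in>S a (Suc n) \<inter> RT. ?w H * ?d) + (\<Sum>H\<in>NR (Suc n). ?w H * ind H i j)"
  proof -
    have "Qf a (Suc n) i j = (\<Sum>H\<in>S a (Suc n) \<inter> RT. ?w H * ind H i j) + (\<Sum>H\<in>S a (Suc n) - RT. ?w H * ind H i j)"
      unfolding Qf_def by (rule sum.Int_Diff) simp
    moreover have "(\<Sum>H\<in>S a (Suc n) \<inter> RT. ?w H * ind H i j) = (\<Sum>H\<in>S a (Suc n) \<inter> RT. ?w H * ?d)"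
    proof (rule sum.cong)
      fix H assume "H \<in> S a (Suc n) \<inter> RT"
      then have "forest a H" "isroot H i" by (auto simp: S_def RT_def)
      then have "froot H i = i" using root_self by blast
      then show "?w H * ind H i j = ?w H * ?d" unfolding ind_def by simp
    qed simp
    ultimately show ?thesis using Sn1 by simp
  qed
  have sg: "sig a (Suc n) = (\<Sum>H\<in>S a (Suc n) \<inter> RT. ?w H) + (\<Sum>H\<in>NR (Suc n). ?w H)"
    unfolding sig_def Sn1[symmetric] by (rule sum.Int_Diff) simp
  have "(\<Sum>H\<in>NR (Suc n). ?w H * ind H i j) + (\<Sum>H\<in>NR (Suc n). ?w H * (?d - ind H i j))
      = (\<Sum>H\<in>NR (Suc n). ?w H * ?d)"
    by (simp add: sum.distrib[symmetric] algebra_simps)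
  then show ?thesis
    unfolding A split N R Q sg by (auto simp: sum_distrib_right[symmetric] algebra_simps)
qed



lemma msub_l: "(A::real^'n::finite^'m) ** (B - C) = A ** B - A ** C"
  by (simp add: matrix_matrix_mult_def vec_eq_iff sum_subtractf algebra_simps)
lemma msub_r: "((B::real^'n::finite^'m) - C) ** (A::real^'k^'n) = B ** A - C ** A"
  by (simp add: matrix_matrix_mult_def vec_eq_iff sum_subtractf algebra_simps)
lemma madd_r: "((B::real^'n::finite^'m) + C) ** (A::real^'k^'n) = B ** A + C ** A"
  by (simp add: matrix_matrix_mult_def vec_eq_iff sum.distrib algebra_simps)

lemma matpow_J: "P ** J = J \<Longrightarrow> matpow P k ** J = J"
  by (induction k) (simp_all add: matrix_mul_assoc[symmetric])

lemma matpow_stoch: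
  assumes "row_stochastic P"
  shows "(\<forall>i j. matpow P k $ i $ j \<ge> 0) \<and> (\<forall>i. (\<Sum>j\<in>UNIV. matpow P k $ i $ j) = 1)"
proof (induction k)
  case 0
  show ?case by (simp add: mat_def sum.delta)
next
  case (Suc k)
  let ?M = "matpow P k"
  have P: "\<forall>i j. P $ i $ j \<ge> 0" "\<forall>i. (\<Sum>j\<in>UNIV. P $ i $ j) = 1" using assms by (auto simp: row_stochastic_def)
  have "\<forall>i j. (?M ** P) $ i $ j \<ge> 0"
    using Suc P by (simp add: matrix_matrix_mult_def sum_nonneg)
  moreover have "(\<Sum>j\<in>UNIV. (?M ** P) $ i $ j) = 1" for i
  proof -
    have "(\<Sum>j\<in>UNIV. (?M ** P) $ i $ j) = (\<Sum>j\<in>UNIV. \<Sum>l\<in>UNIV. ?M $ i $ l * P $ l $ j)"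
      by (simp add: matrix_matrix_mult_def)
    also have "\<dots> = (\<Sum>l\<in>UNIV. \<Sum>j\<in>UNIV. ?M $ i $ l * P $ l $ j)" by (rule sum.swap)
    also have "\<dots> = (\<Sum>l\<in>UNIV. ?M $ i $ l * (\<Sum>j\<in>UNIV. P $ l $ j))" by (simp add: sum_distrib_left)
    also have "\<dots> = 1" using P Suc by simp
    finally show ?thesis .
  qed
  ultimately show ?case by simp
qed

lemma matpow_bound:
  assumes "row_stochastic P" shows "0 \<le> matpow P k $ i $ j \<and> matpow P k $ i $ j \<le> 1"
proof -
  have st: "\<forall>i j. matpow P k $ i $ j \<ge> 0" "(\<Sum>j\<in>UNIV. matpow P k $ i $ j) = 1"
    using matpow_stoch[OF assms] by auto
  have "matpow P k $ i $ j \<le> (\<Sum>j\<in>UNIV. matpow P k $ i $ j)"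
    by (rule member_le_sum) (use st in auto)
  then show ?thesis using st by simp
qed

lemma cesaro_sum:
  assumes PJ: "P ** J = J" and IJ: "mat 1 - J = (mat 1 - P) ** Y"
  shows "(\<Sum>i=1..m. matpow P i) = real m *\<^sub>R J + (P - matpow P (Suc m)) ** (Y::real^'n::finite^'n)"
proof (induction m)
  case 0
  show ?case by simp
next
  case (Suc m)
  have step: "matpow P k = J + (matpow P k - matpow P (Suc k)) ** Y" for k
  proof -
    have "matpow P k - J = matpow P k ** (mat 1 - J)" using matpow_J[OF PJ] by (simp add: msub_l)
    also have "\<dots> = (matpow P k ** (mat 1 - P)) ** Y" by (simp add: IJ matrix_mul_assoc)
    also have "\<dots> = (matpow P k - matpow P (Suc k)) ** Y" by (simp add: msub_l)
    finally show ?thesis by (simp add: algebra_simps)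
  qed
  have "(\<Sum>i=1..Suc m. matpow P i) = (\<Sum>i=1..m. matpow P i) + matpow P (Suc m)" by simp
  also have "\<dots> = real m *\<^sub>R J + (P - matpow P (Suc m)) ** Y + (J + (matpow P (Suc m) - matpow P (Suc (Suc m))) ** Y)"
    using Suc step[of "Suc m"] by simp
  also have "\<dots> = real (Suc m) *\<^sub>R J + (P - matpow P (Suc (Suc m))) ** Y"
    by (simp add: msub_r algebra_simps)
  finally show ?case .
qed

lemma cesaro:
  fixes P J Y :: "real^'n::finite^'n"
  assumes st: "row_stochastic P" and PJ: "P ** J = J" and IJ: "mat 1 - J = (mat 1 - P) ** Y"
  shows "(\<lambda>m. (1 / real m) *\<^sub>R (\<Sum>i=1..m. matpow P i)) \<longlonglongrightarrow> J"
proof -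
  define D where "D m = (1 / real m) *\<^sub>R ((P - matpow P (Suc m)) ** Y)" for m
  have ev: "eventually (\<lambda>m. J + D m = (1 / real m) *\<^sub>R (\<Sum>i=1..m. matpow P i)) sequentially"
  proof (rule eventually_sequentiallyI[of 1])
    fix m :: nat assume "m \<ge> 1"
    then show "J + D m = (1 / real m) *\<^sub>R (\<Sum>i=1..m. matpow P i)"
      unfolding cesaro_sum[OF PJ IJ] D_def by (simp add: scaleR_add_right)
  qed
  have D0: "D \<longlonglongrightarrow> 0"
  proof (rule vec_tendstoI, rule vec_tendstoI)
    fix i j
    define B where "B = (\<Sum>l\<in>UNIV. \<bar>Y $ l $ j\<bar>)"
    have bnd: "\<bar>((P - matpow P (Suc m)) ** Y) $ i $ j\<bar> \<le> B" for m
    proof -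
      have "\<bar>((P - matpow P (Suc m)) ** Y) $ i $ j\<bar> = \<bar>\<Sum>l\<in>UNIV. (P $ i $ l - matpow P (Suc m) $ i $ l) * Y $ l $ j\<bar>"
        by (simp add: matrix_matrix_mult_def)
      also have "\<dots> \<le> (\<Sum>l\<in>UNIV. \<bar>(P $ i $ l - matpow P (Suc m) $ i $ l) * Y $ l $ j\<bar>)"
        by (rule sum_abs)
      also have "\<dots> \<le> B" unfolding B_def
      proof (rule sum_mono)
        fix l
        have "P $ i $ l = matpow P 1 $ i $ l" by simp
        then have "\<bar>P $ i $ l - matpow P (Suc m) $ i $ l\<bar> \<le> 1"
          using matpow_bound[OF st, of 1 i l] matpow_bound[OF st, of "Suc m" i l] by (simp add: abs_le_iff)
        then show "\<bar>(P $ i $ l - matpow P (Suc m) $ i $ l) * Y $ l $ j\<bar> \<le> \<bar>Y $ l $ j\<bar>"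
          by (simp add: abs_mult mult_left_le_one_le)
      qed
      finally show ?thesis .
    qed
    show "((\<lambda>m. D m $ i $ j) \<longlonglongrightarrow> (0::real^'n^'n) $ i $ j)"
    proof -
      have "((\<lambda>m. D m $ i $ j) \<longlonglongrightarrow> 0)"
      proof (rule Lim_null_comparison)
        show "eventually (\<lambda>m. norm (D m $ i $ j) \<le> B * (1 / real m)) sequentially"
        proof (rule always_eventually, rule allI)
          fix m
          have "norm (D m $ i $ j) = (1 / real m) * \<bar>((P - matpow P (Suc m)) ** Y) $ i $ j\<bar>"
            unfolding D_def by (simp add: abs_mult)
          also have "\<dots> \<le> (1 / real m) * B" by (rule mult_left_mono[OF bnd]) simp
          finally show "norm (D m $ i $ j) \<le> B * (1 / real m)" by (simp add: mult.commute)
        qed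
        show "(\<lambda>m. B * (1 / real m)) \<longlonglongrightarrow> 0"
          using tendsto_mult_right_zero[OF lim_1_over_n, of B] by simp
      qed
      then show ?thesis by simp
    qed
  qed
  have "(\<lambda>m. J + D m) \<longlonglongrightarrow> J + 0" by (intro tendsto_add tendsto_const D0)
  then have "(\<lambda>m. J + D m) \<longlonglongrightarrow> J" by simp
  then show ?thesis using ev by (rule Lim_transform_eventually)
qed



lemma Lsum:
  fixes a :: "'n::finite \<Rightarrow> 'n \<Rightarrow> real"
  assumes wd: "weighted_digraph a"
  shows "(\<Sum>l\<in>UNIV. kirchhoff a $ i $ l * x l) = (\<Sum>l\<in>UNIV. a i l * (x i - x l))"
proof -
  have aii: "a i i = 0" using wd by (simp add: weighted_digraph_def)
  have "(\<Sum>l\<in>UNIV. kirchhoff a $ i $ l * x l) = kirchhoff a $ i $ i * x i + (\<Sum>l\<in>UNIV-{i}. kirchhoff a $ i $ l * x l)"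
    by (simp add: sum.remove)
  also have "(\<Sum>l\<in>UNIV-{i}. kirchhoff a $ i $ l * x l) = (\<Sum>l\<in>UNIV-{i}. - (a i l * x l))"
    by (rule sum.cong) (auto simp: kirchhoff_def)
  also have "kirchhoff a $ i $ i * x i = (\<Sum>l\<in>UNIV-{i}. a i l * x i)"
    by (simp add: kirchhoff_def sum_distrib_right)
  also have "(\<Sum>l\<in>UNIV-{i}. a i l * x i) + (\<Sum>l\<in>UNIV-{i}. - (a i l * x l)) = (\<Sum>l\<in>UNIV-{i}. a i l * (x i - x l))"
    by (simp add: sum.distrib[symmetric] algebra_simps)
  also have "\<dots> = (\<Sum>l\<in>UNIV. a i l * (x i - x l))"
    using sum.remove[of UNIV i "\<lambda>l. a i l * (x i - x l)"] aii by simp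
  finally show ?thesis .
qed

definition Qm :: "('n::finite \<Rightarrow> 'n \<Rightarrow> real) \<Rightarrow> nat \<Rightarrow> real^'n^'n" where
  "Qm a n = (\<chi> i j. Qf a n i j)"

lemma K_Qm:
  assumes wd: "weighted_digraph a"
  shows "kirchhoff a ** Qm a n = sig a (Suc n) *\<^sub>R mat 1 - Qm a (Suc n)"
proof -
  have "(kirchhoff a ** Qm a n) $ i $ j = (sig a (Suc n) *\<^sub>R mat 1 - Qm a (Suc n)) $ i $ j" for i j
  proof -
    have "(kirchhoff a ** Qm a n) $ i $ j = (\<Sum>l\<in>UNIV. kirchhoff a $ i $ l * Qf a n l j)"
      by (simp add: matrix_matrix_mult_def Qm_def)
    also have "\<dots> = (\<Sum>l\<in>UNIV. a i l * (Qf a n i j - Qf a n l j))" by (rule Lsum[OF wd])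
    also have "\<dots> = (if i = j then sig a (Suc n) else 0) - Qf a (Suc n) i j"
      using key_identity[OF wd, of n i j] by simp
    finally show ?thesis by (simp add: Qm_def mat_def)
  qed
  then show ?thesis by (simp add: vec_eq_iff)
qed

lemma forest_empty: "forest a {}"
  by (simp add: forest_def acyclic_def)

lemma S0: "S a 0 = {{}}"
  using forest_empty by (auto simp: S_def)

lemma root_empty: "froot {} (v::'n::finite) = v"
  using root_eq[OF forest_empty, of v v] by (simp add: isroot_def)

lemma Qm0: "Qm a 0 = mat 1" and sig0: "sig a 0 = 1"
  by (simp_all add: Qm_def Qf_def sig_def S0 ind_def root_empty subgraph_weight_def mat_def vec_eq_iff)

definition nu :: "('n::finite \<Rightarrow> 'n \<Rightarrow> real) \<Rightarrow> nat" where
  "nu a = Max (card ` {G. forest a G})"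

lemma card_le_nu: "forest a F \<Longrightarrow> card F \<le> nu a"
  unfolding nu_def by (rule Max_ge) auto

lemma S_nu_ne: "S a (nu a) \<noteq> {}"
proof -
  have "nu a \<in> card ` {G. forest a G}" unfolding nu_def
    by (rule Max_in) (use forest_empty in auto)
  then show ?thesis by (auto simp: S_def)
qed

lemma S_big: "S a (Suc (nu a)) = {}"
  using card_le_nu by (fastforce simp: S_def)

lemma weight_pos: "forest a F \<Longrightarrow> subgraph_weight a F > 0"
  unfolding subgraph_weight_def forest_def
  by (rule prod_pos) (auto simp: arcs_def)

lemma sig_nu_pos: "sig a (nu a) > 0"
  unfolding sig_def using S_nu_ne weight_pos by (intro sum_pos) (auto simp: S_def)

lemma in_tree_iff: "forest a F \<Longrightarrow> in_tree_rooted_at F i j \<longleftrightarrow> froot F i = j"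
  unfolding in_tree_rooted_at_def
  using root_eq[of a F j i] root_prop[of a F i] by (auto simp: isroot_def)

lemma max_S: "max_out_forests a = S a (nu a)"
  unfolding max_out_forests_def S_def nu_def out_forest_iff by simp

lemma Jbar_Qm: "Jbar a = (1 / sig a (nu a)) *\<^sub>R Qm a (nu a)"
proof -
  have "Jbar a $ i $ j = Qf a (nu a) i j / sig a (nu a)" for i j
  proof -
    have "(\<Sum>F\<in>{F\<in>max_out_forests a. in_tree_rooted_at F i j}. subgraph_weight a F)
        = (\<Sum>F\<in>S a (nu a). if in_tree_rooted_at F i j then subgraph_weight a F else 0)"
      unfolding max_S by (rule sum.inter_filter) simp
    also have "\<dots> = Qf a (nu a) i j"
      unfolding Qf_def by (rule sum.cong) (auto simp: S_def in_tree_iff ind_def)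
    finally show ?thesis by (simp add: Jbar_def max_S sig_def)
  qed
  then show ?thesis by (simp add: vec_eq_iff Qm_def)
qed

lemma Qm_big: "Qm a (Suc (nu a)) = 0" and sig_big: "sig a (Suc (nu a)) = 0"
  by (simp_all add: Qm_def Qf_def sig_def S_big vec_eq_iff)

lemma K_J:
  assumes wd: "weighted_digraph a" shows "kirchhoff a ** Jbar a = 0"
  unfolding Jbar_Qm matrix_scalar_ac
  using K_Qm[OF wd, of "nu a"] by (simp add: Qm_big sig_big scalar_matrix_assoc[symmetric])

lemma I_J:
  assumes wd: "weighted_digraph a" shows "\<exists>X. mat 1 - Jbar a = kirchhoff a ** X"
proof (cases "nu a")
  case 0
  then have "Jbar a = mat 1" unfolding Jbar_Qm by (simp add: Qm0 sig0)
  then show ?thesis by (intro exI[of _ 0]) simp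
next
  case (Suc m)
  have s: "sig a (nu a) \<noteq> 0" using sig_nu_pos[of a] by simp
  have "kirchhoff a ** ((1 / sig a (nu a)) *\<^sub>R Qm a m) = (1 / sig a (nu a)) *\<^sub>R (kirchhoff a ** Qm a m)"
    by (simp add: matrix_scalar_ac scalar_matrix_assoc)
  also have "\<dots> = mat 1 - Jbar a"
    unfolding K_Qm[OF wd] Jbar_Qm Suc[symmetric] using s by (simp add: scaleR_diff_right)
  finally show ?thesis by (intro exI[of _ "(1 / sig a (nu a)) *\<^sub>R Qm a m"]) simp
qed

theorem proposition8:
  fixes a :: "'n::finite \<Rightarrow> 'n \<Rightarrow> real" and \<epsilon> :: real
  assumes "weighted_digraph a"
    and "\<epsilon> > 0"
    and "row_stochastic (mat 1 - \<epsilon> *\<^sub>R kirchhoff a)"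
  shows "(\<lambda>m. (1 / real m) *\<^sub>R (\<Sum>i=1..m. matpow (mat 1 - \<epsilon> *\<^sub>R kirchhoff a) i))
           \<longlonglongrightarrow> Jbar a"
proof -
  let ?P = "mat 1 - \<epsilon> *\<^sub>R kirchhoff a"
  obtain X where X: "mat 1 - Jbar a = kirchhoff a ** X" using I_J[OF assms(1)] by blast
  have PJ: "?P ** Jbar a = Jbar a"
    using K_J[OF assms(1)] by (simp add: msub_r scalar_matrix_assoc[symmetric])
  have IJ: "mat 1 - Jbar a = (mat 1 - ?P) ** ((1 / \<epsilon>) *\<^sub>R X)"
    using X assms(2) by (simp add: matrix_scalar_ac scalar_matrix_assoc[symmetric])
  show ?thesis by (rule cesaro[OF assms(3) PJ IJ])
qed


end
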